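(* For $n\ge 5$, every two bases of $\Theta_n$ intersect, every two bases of $\Theta_n^\star$ intersect, and $f(\Theta_n)\le n-2$.
   Context: For $n\ge 1$, $\Theta_n$ is the matroid on ground set $X\cup Y$ with $X=\{x_1,\dots,x_n\}$, $Y=\{y_1,\dots,y_n\}$ disjoint, whose bases are the $n$-subsets $B\subseteq X\cup Y$ with $|B\cap X|\le 2$ and $B\neq(Y\setminus\{y_i\})\cup\{x_i\}$ for all $i$. For a matroid $M$, the distance between bases $B,B'$ is $|B\triangle B'|$; the Borsuk number $f(M)$ is the minimum number of parts in a partition of the set of bases in which each part has diameter strictly smaller than the diameter of the set of all bases ($f(M)=+\infty$ if $M$ has one basis). *)

theory Defs
  imports Main "HOL-Library.Extended_Nat"
begin

text \<open>Ground set of Theta_n: x_i is Inl i, y_i is Inr i, for i in {1..n}.\<close>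

definition theta_X :: "nat \<Rightarrow> (nat + nat) set" where
  "theta_X n = Inl ` {1..n}"

definition theta_Y :: "nat \<Rightarrow> (nat + nat) set" where
  "theta_Y n = Inr ` {1..n}"

definition theta_ground :: "nat \<Rightarrow> (nat + nat) set" where
  "theta_ground n = theta_X n \<union> theta_Y n"

definition theta_bases :: "nat \<Rightarrow> (nat + nat) set set" where
  "theta_bases n = {B. B \<subseteq> theta_ground n \<and> card B = n \<and> card (B \<inter> theta_X n) \<le> 2
       \<and> (\<forall>i\<in>{1..n}. B \<noteq> (theta_Y n - {Inr i}) \<union> {Inl i})}"

definition dual_bases :: "'a set \<Rightarrow> 'a set set \<Rightarrow> 'a set set" where
  "dual_bases E \<B> = (\<lambda>B. E - B) ` \<B>"

definition sdist :: "'a set \<Rightarrow> 'a set \<Rightarrow> nat" where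
  "sdist B B' = card ((B - B') \<union> (B' - B))"

definition diam :: "'a set set \<Rightarrow> nat" where
  "diam \<B> = Max {sdist B B' | B B'. B \<in> \<B> \<and> B' \<in> \<B>}"

definition small_partition :: "'a set set \<Rightarrow> nat \<Rightarrow> 'a set set set \<Rightarrow> nat \<Rightarrow> bool" where
  "small_partition \<B> d P k \<longleftrightarrow>
     finite P \<and> card P = k \<and> \<Union>P = \<B> \<and> {} \<notin> P \<and>
     (\<forall>p\<in>P. \<forall>q\<in>P. p \<noteq> q \<longrightarrow> p \<inter> q = {}) \<and>
     (\<forall>p\<in>P. \<forall>B\<in>p. \<forall>B'\<in>p. sdist B B' < d)"

definition borsuk :: "'a set set \<Rightarrow> enat" where
  "borsuk \<B> = (if card \<B> \<le> 1 then \<infinity>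
     else enat (LEAST k. \<exists>P. small_partition \<B> (diam \<B>) P k))"

end

theory Submission
  imports Defs
begin


lemma finX[simp]: "finite (theta_X n)" by (simp add: theta_X_def)
lemma finY[simp]: "finite (theta_Y n)" by (simp add: theta_Y_def)
lemma cardX: "card (theta_X n) = n" by (simp add: theta_X_def card_image)
lemma cardY: "card (theta_Y n) = n" by (simp add: theta_Y_def card_image)
lemma XY_disj: "theta_X n \<inter> theta_Y n = {}" by (auto simp: theta_X_def theta_Y_def)
lemma fin_ground[simp]: "finite (theta_ground n)" by (simp add: theta_ground_def)

lemma base_sub: "B \<in> theta_bases n \<Longrightarrow> B \<subseteq> theta_ground n" by (simp add: theta_bases_def)
lemma base_card: "B \<in> theta_bases n \<Longrightarrow> card B = n" by (simp add: theta_bases_def)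
lemma base_X: "B \<in> theta_bases n \<Longrightarrow> card (B \<inter> theta_X n) \<le> 2" by (simp add: theta_bases_def)
lemma fin_base: "B \<in> theta_bases n \<Longrightarrow> finite B"
  using base_sub fin_ground finite_subset by blast

lemma split_card:
  assumes "B \<subseteq> theta_ground n"
  shows "card B = card (B \<inter> theta_X n) + card (B \<inter> theta_Y n)"
proof -
  have fB: "finite B" using assms fin_ground finite_subset by blast
  have e: "B = (B \<inter> theta_X n) \<union> (B \<inter> theta_Y n)" using assms by (auto simp: theta_ground_def)
  have "card ((B \<inter> theta_X n) \<union> (B \<inter> theta_Y n)) = card (B \<inter> theta_X n) + card (B \<inter> theta_Y n)"
    by (rule card_Un_disjoint) (use fB XY_disj[of n] in auto)
  then show ?thesis using e by simp
qed

lemma inter_big: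
  assumes "finite U" "A \<subseteq> U" "C \<subseteq> U" "card U + k \<le> card A + card C"
  shows "k \<le> card (A \<inter> C)"
proof -
  have fA: "finite A" "finite C" using assms finite_subset by auto
  have "card (A \<union> C) + card (A \<inter> C) = card A + card C" using card_Un_Int fA by metis
  moreover have "card (A \<union> C) \<le> card U" using assms by (simp add: card_mono)
  ultimately show ?thesis using assms by linarith
qed

lemma baseY: "B \<in> theta_bases n \<Longrightarrow> n \<le> card (B \<inter> theta_Y n) + 2"
  using split_card[OF base_sub] base_card base_X by fastforce

lemma part1:
  assumes "n \<ge> 5" "B \<in> theta_bases n" "B' \<in> theta_bases n"
  shows "B \<inter> B' \<noteq> {}"
proof -
  have "1 \<le> card ((B \<inter> theta_Y n) \<inter> (B' \<inter> theta_Y n))"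
    by (rule inter_big[of "theta_Y n"]) (use baseY[OF assms(2)] baseY[OF assms(3)] assms(1) cardY[of n] in auto)
  then show ?thesis by (metis card.empty inf.absorb_iff2 inf_bot_right inf_left_commute le_zero_eq
     inf_sup_aci(1) nat.simps(3) One_nat_def)
qed

lemma part2:
  assumes "n \<ge> 5" "B \<in> theta_bases n" "B' \<in> theta_bases n"
  shows "(theta_ground n - B) \<inter> (theta_ground n - B') \<noteq> {}"
proof -
  have c: "n \<le> card (theta_X n - D) + 2" if "D \<in> theta_bases n" for D
  proof -
    have "card (theta_X n - D) = card (theta_X n) - card (theta_X n \<inter> D)"
      by (rule card_Diff_subset_Int) simp
    then show ?thesis using base_X[OF that] cardX[of n] by (simp add: Int_commute)
  qed
  have "1 \<le> card ((theta_X n - B) \<inter> (theta_X n - B'))"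
    by (rule inter_big[of "theta_X n"]) (use c[OF assms(2)] c[OF assms(3)] assms(1) cardX[of n] in auto)
  then have "(theta_X n - B) \<inter> (theta_X n - B') \<noteq> {}" by auto
  then show ?thesis by (auto simp: theta_ground_def)
qed



lemma Inl_notY[simp]: "Inl a \<notin> theta_Y n" by (auto simp: theta_Y_def)
lemma Inr_notX[simp]: "Inr a \<notin> theta_X n" by (auto simp: theta_X_def)
lemma InlX[simp]: "Inl a \<in> theta_X n \<longleftrightarrow> a \<in> {1..n}" by (auto simp: theta_X_def)
lemma InrY[simp]: "Inr a \<in> theta_Y n \<longleftrightarrow> a \<in> {1..n}" by (auto simp: theta_Y_def)

lemma Y_base: "theta_Y n \<in> theta_bases n"
proof -
  have "theta_Y n \<inter> theta_X n = {}" using XY_disj[of n] by blast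
  then have i2: "card (theta_Y n \<inter> theta_X n) \<le> 2" by simp
  have ne: "theta_Y n \<noteq> theta_Y n - {Inr i} \<union> {Inl i}" for i
  proof
    assume "theta_Y n = theta_Y n - {Inr i} \<union> {Inl i}"
    then have "Inl i \<in> theta_Y n" by blast
    then show False by simp
  qed
  have sub: "theta_Y n \<subseteq> theta_ground n" by (auto simp: theta_ground_def)
  show ?thesis unfolding theta_bases_def mem_Collect_eq by (intro conjI ballI i2 sub ne cardY)
qed

lemma base1:
  assumes "a \<in> {1..n}" "p \<in> {1..n}" "a \<noteq> p"
  shows "insert (Inl a) (theta_Y n - {Inr p}) \<in> theta_bases n"
proof -
  have c1: "card (theta_Y n - {Inr p}) = n - 1" using assms by (simp add: cardY)
  then have c: "card (insert (Inl a) (theta_Y n - {Inr p})) = n"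
    using c1 assms by simp
  have i: "insert (Inl a) (theta_Y n - {Inr p}) \<inter> theta_X n = {Inl a}"
    using assms XY_disj[of n] by auto
  have ne: "insert (Inl a) (theta_Y n - {Inr p}) \<noteq> theta_Y n - {Inr i} \<union> {Inl i}" for i
  proof
    assume h: "insert (Inl a) (theta_Y n - {Inr p}) = theta_Y n - {Inr i} \<union> {Inl i}"
    then have "Inl a \<in> theta_Y n - {Inr i} \<union> {Inl i}" by blast
    then have "i = a" by simp
    then have "Inr p \<in> theta_Y n - {Inr i} \<union> {Inl i}" using assms by simp
    then show False using h by blast
  qed
  have sub: "insert (Inl a) (theta_Y n - {Inr p}) \<subseteq> theta_ground n"
    using assms by (auto simp: theta_ground_def)
  have i2: "card (insert (Inl a) (theta_Y n - {Inr p}) \<inter> theta_X n) \<le> 2" using i by simp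
  show ?thesis unfolding theta_bases_def mem_Collect_eq by (intro conjI ballI c i2 sub ne)
qed

lemma base2:
  assumes "a \<in> {1..n}" "b \<in> {1..n}" "p \<in> {1..n}" "q \<in> {1..n}" "a \<noteq> b" "p \<noteq> q"
  shows "insert (Inl a) (insert (Inl b) (theta_Y n - {Inr p, Inr q})) \<in> theta_bases n"
proof -
  have Inr: "{Inr p, Inr q} \<subseteq> theta_Y n" using assms by simp
  have n2: "2 \<le> n" using assms by (cases "p < q") auto
  have c1: "card (theta_Y n - {Inr p, Inr q}) = n - 2"
    using Inr assms n2 by (simp add: cardY card_Diff_subset)
  have c: "card (insert (Inl a) (insert (Inl b) (theta_Y n - {Inr p, Inr q}))) = n"
    using c1 assms n2 by (simp; linarith)
  have i: "insert (Inl a) (insert (Inl b) (theta_Y n - {Inr p, Inr q})) \<inter> theta_X n = {Inl a, Inl b}"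
    using assms XY_disj[of n] by auto
  then have i2: "card (insert (Inl a) (insert (Inl b) (theta_Y n - {Inr p, Inr q})) \<inter> theta_X n) \<le> 2"
    using assms by simp
  have ne: "insert (Inl a) (insert (Inl b) (theta_Y n - {Inr p, Inr q})) \<noteq> theta_Y n - {Inr i} \<union> {Inl i}" for i
  proof
    assume h: "insert (Inl a) (insert (Inl b) (theta_Y n - {Inr p, Inr q})) = theta_Y n - {Inr i} \<union> {Inl i}"
    then have "Inl a \<in> theta_Y n - {Inr i} \<union> {Inl i}" "Inl b \<in> theta_Y n - {Inr i} \<union> {Inl i}" by blast+
    then show False using assms by simp
  qed
  have sub: "insert (Inl a) (insert (Inl b) (theta_Y n - {Inr p, Inr q})) \<subseteq> theta_ground n"
    using assms by (auto simp: theta_ground_def)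
  show ?thesis unfolding theta_bases_def mem_Collect_eq by (intro conjI ballI i2 sub ne c)
qed

lemma sdist_small:
  assumes "B \<in> theta_bases n" "B' \<in> theta_bases n" "n \<le> card (B \<inter> B') + 3"
  shows "sdist B B' \<le> 6"
proof -
  have f: "finite B" "finite B'" using fin_base assms by auto
  have "sdist B B' = card (B - B') + card (B' - B)"
    unfolding sdist_def by (rule card_Un_disjoint) (use f in auto)
  also have "card (B - B') = n - card (B \<inter> B')"
    using card_Diff_subset_Int[of B B'] f base_card[OF assms(1)] by simp
  also have "card (B' - B) = n - card (B \<inter> B')"
    using card_Diff_subset_Int[of B' B] f base_card[OF assms(2)] by (simp add: Int_commute)
  finally show ?thesis using assms(3) by linarith
qed

lemma inter_split:
  assumes "B \<in> theta_bases n" "B' \<in> theta_bases n"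
  shows "card (B \<inter> B') = card ((B \<inter> theta_X n) \<inter> (B' \<inter> theta_X n)) + card ((B \<inter> theta_Y n) \<inter> (B' \<inter> theta_Y n))"
proof -
  have "B \<inter> B' \<subseteq> theta_ground n" using base_sub[OF assms(1)] by auto
  from split_card[OF this] show ?thesis by (simp add: Int_ac)
qed



definition thpart :: "nat \<Rightarrow> nat \<Rightarrow> (nat + nat) set set" where
  "thpart n c = (if c \<le> n - 3 then {B \<in> theta_bases n. Inl c \<in> B \<and> (\<forall>i\<in>{1..<c}. Inl i \<notin> B)}
     else {B \<in> theta_bases n. \<forall>i\<in>{1..n-3}. Inl i \<notin> B})"

lemma part_sub: "thpart n c \<subseteq> theta_bases n"
  by (auto simp: thpart_def split: if_splits)

lemma part_ne:
  assumes "n \<ge> 5" "c \<in> {1..n-2}"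
  shows "thpart n c \<noteq> {}"
proof (cases "c \<le> n - 3")
  case True
  have "insert (Inl c) (theta_Y n - {Inr (c+1)}) \<in> theta_bases n"
    by (rule base1) (use assms True in auto)
  moreover have "\<forall>i\<in>{1..<c}. Inl i \<notin> insert (Inl c) (theta_Y n - {Inr (c+1)})" by auto
  ultimately have "insert (Inl c) (theta_Y n - {Inr (c+1)}) \<in> thpart n c"
    using True by (simp add: thpart_def)
  then show ?thesis by blast
next
  case False
  have "theta_Y n \<in> thpart n c" using False Y_base by (simp add: thpart_def)
  then show ?thesis by blast
qed

lemma part_disj:
  assumes "c \<in> {1..n-2}" "d \<in> {1..n-2}" "c < d"
  shows "thpart n c \<inter> thpart n d = {}"
proof -
  have "c \<le> n - 3" using assms by auto
  then show ?thesis using assms by (auto simp: thpart_def)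
qed

lemma part_cover:
  assumes "n \<ge> 5" "B \<in> theta_bases n"
  shows "\<exists>c\<in>{1..n-2}. B \<in> thpart n c"
proof (cases "\<exists>i\<in>{1..n-3}. Inl i \<in> B")
  case True
  define S where "S = {i\<in>{1..n-3}. Inl i \<in> B}"
  have fS: "finite S" "S \<noteq> {}" using True by (auto simp: S_def)
  define c where "c = Min S"
  have cS: "c \<in> S" using fS Min_in c_def by blast
  have "\<forall>i\<in>{1..<c}. Inl i \<notin> B"
  proof (intro ballI notI)
    fix i assume i: "i \<in> {1..<c}" "Inl i \<in> B"
    then have "i \<in> S" using cS by (auto simp: S_def)
    then have "c \<le> i" using fS c_def by simp
    then show False using i by simp
  qed
  then have "B \<in> thpart n c" using cS assms by (auto simp: thpart_def S_def)
  then show ?thesis using cS assms by (auto simp: S_def)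
next
  case False
  then have "B \<in> thpart n (n-2)" using assms by (auto simp: thpart_def)
  then show ?thesis using assms by auto
qed

lemma card_split_n: "B \<in> theta_bases n \<Longrightarrow> card (B \<inter> theta_X n) + card (B \<inter> theta_Y n) = n"
  using split_card[OF base_sub] base_card by metis

lemma part_close:
  assumes "n \<ge> 5" "c \<in> {1..n-2}" "B \<in> thpart n c" "B' \<in> thpart n c"
  shows "n \<le> card (B \<inter> B') + 3"
proof -
  have bB: "B \<in> theta_bases n" "B' \<in> theta_bases n" using assms part_sub by auto
  note sp = inter_split[OF bB]
  note cB = card_split_n[OF bB(1)] card_split_n[OF bB(2)]
  note xB = base_X[OF bB(1)] base_X[OF bB(2)]
  have Ysub: "B \<inter> theta_Y n \<subseteq> theta_Y n" "B' \<inter> theta_Y n \<subseteq> theta_Y n" by auto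
  have Y4: "n - 4 \<le> card ((B \<inter> theta_Y n) \<inter> (B' \<inter> theta_Y n))"
    by (rule inter_big[OF finY Ysub]) (use cB xB assms(1) cardY[of n] in linarith)
  show ?thesis
  proof (cases "c \<le> n - 3")
    case True
    then have "Inl c \<in> (B \<inter> theta_X n) \<inter> (B' \<inter> theta_X n)"
      using assms by (auto simp: thpart_def)
    then have "1 \<le> card ((B \<inter> theta_X n) \<inter> (B' \<inter> theta_X n))"
      by (metis One_nat_def Suc_leI card_gt_0_iff empty_iff finX finite_Int)
    then show ?thesis using sp Y4 assms(1) by linarith
  next
    case False
    define Z :: "(nat + nat) set" where "Z = Inl ` {n-2..n}"
    have cZ: "card Z = 3" using assms(1) by (simp add: Z_def card_image)
    have Zs: "B \<inter> theta_X n \<subseteq> Z" "B' \<inter> theta_X n \<subseteq> Z"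
      using False assms by (force simp: thpart_def Z_def theta_X_def)+
    show ?thesis
    proof (cases "card (B \<inter> theta_X n) \<le> 1 \<or> card (B' \<inter> theta_X n) \<le> 1")
      case True
      have "n - 3 \<le> card ((B \<inter> theta_Y n) \<inter> (B' \<inter> theta_Y n))"
        by (rule inter_big[OF finY Ysub]) (use True cB xB assms(1) cardY[of n] in linarith)
      then show ?thesis using sp assms(1) by linarith
    next
      case False
      have "1 \<le> card ((B \<inter> theta_X n) \<inter> (B' \<inter> theta_X n))"
        by (rule inter_big[of Z]) (use False Zs cZ xB in \<open>auto simp: Z_def\<close>)
      then show ?thesis using sp Y4 assms(1) by linarith
    qed
  qed
qed



lemma part3:
  assumes n5: "n \<ge> 5"
  shows "borsuk (theta_bases n) \<le> enat (n - 2)"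
proof -
  let ?b = "theta_bases n"
  have fb: "finite ?b"
    by (rule finite_subset[of _ "Pow (theta_ground n)"]) (auto simp: theta_bases_def)
  define B1 where "B1 = insert (Inl 1) (insert (Inl 2) (theta_Y n - {Inr 1, Inr 2}))"
  define B2 where "B2 = insert (Inl 3) (insert (Inl 4) (theta_Y n - {Inr 3, Inr 4}))"
  have B1b: "B1 \<in> ?b" unfolding B1_def by (rule base2) (use n5 in auto)
  have B2b: "B2 \<in> ?b" unfolding B2_def by (rule base2) (use n5 in auto)
  have "(B1 - B2) \<union> (B2 - B1) = {Inl 1, Inl 2, Inl 3, Inl 4, Inr 1, Inr 2, Inr 3, Inr 4}"
    using n5 by (auto simp: B1_def B2_def)
  then have s8: "sdist B1 B2 = 8" by (simp add: sdist_def)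
  have fS: "finite {sdist B B' | B B'. B \<in> ?b \<and> B' \<in> ?b}"
  proof -
    have "{sdist B B' | B B'. B \<in> ?b \<and> B' \<in> ?b} = (\<lambda>(B,B'). sdist B B') ` (?b \<times> ?b)" by auto
    then show ?thesis using fb by simp
  qed
  have d8: "8 \<le> diam ?b" unfolding diam_def
  proof -
    have "sdist B1 B2 \<in> {sdist B B' | B B'. B \<in> ?b \<and> B' \<in> ?b}" using B1b B2b by blast
    then have "sdist B1 B2 \<le> Max {sdist B B' | B B'. B \<in> ?b \<and> B' \<in> ?b}" by (rule Max_ge[OF fS])
    then show "8 \<le> Max {sdist B B' | B B'. B \<in> ?b \<and> B' \<in> ?b}" using s8 by simp
  qed
  have "Inl 1 \<in> B1" by (simp add: B1_def)
  then have "B1 \<noteq> theta_Y n" using Inl_notY by metis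
  then have "card {B1, theta_Y n} = 2" by simp
  moreover have "card {B1, theta_Y n} \<le> card ?b" by (rule card_mono[OF fb]) (use B1b Y_base in auto)
  ultimately have cb: "\<not> card ?b \<le> 1" by linarith
  define P where "P = thpart n ` {1..n-2}"
  have inj: "inj_on (thpart n) {1..n-2}"
  proof
    fix c d assume cd: "c \<in> {1..n-2}" "d \<in> {1..n-2}" "thpart n c = thpart n d"
    show "c = d"
    proof (rule ccontr)
      assume "c \<noteq> d"
      then have "thpart n c \<inter> thpart n d = {}" using part_disj cd
        by (metis Int_commute linorder_neqE_nat)
      then show False using cd part_ne[OF n5 cd(1)] by simp
    qed
  qed
  have sp: "small_partition ?b (diam ?b) P (n - 2)"
    unfolding small_partition_def
  proof (intro conjI)
    show "finite P" by (simp add: P_def)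
    show "card P = n - 2" using inj by (simp add: P_def card_image)
    show "\<Union>P = ?b"
    proof
      show "\<Union>P \<subseteq> ?b" using part_sub by (auto simp: P_def)
      show "?b \<subseteq> \<Union>P" using part_cover[OF n5] by (auto simp: P_def)
    qed
    show "{} \<notin> P" using part_ne[OF n5] unfolding P_def by (metis imageE)
    show "\<forall>p\<in>P. \<forall>q\<in>P. p \<noteq> q \<longrightarrow> p \<inter> q = {}"
    proof (intro ballI impI)
      fix p q assume h: "p \<in> P" "q \<in> P" "p \<noteq> q"
      then obtain c d where c: "c \<in> {1..n-2}" "p = thpart n c" and d: "d \<in> {1..n-2}" "q = thpart n d"
        unfolding P_def by blast
      have "c \<noteq> d" using h c d by blast
      then have "c < d \<or> d < c" by linarith
      then show "p \<inter> q = {}"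
      proof
        assume "c < d" then show ?thesis using part_disj[OF c(1) d(1)] c d by simp
      next
        assume "d < c" then show ?thesis using part_disj[OF d(1) c(1)] c d by blast
      qed
    qed
    show "\<forall>p\<in>P. \<forall>B\<in>p. \<forall>B'\<in>p. sdist B B' < diam ?b"
    proof (intro ballI)
      fix p B B' assume h: "p \<in> P" "B \<in> p" "B' \<in> p"
      then obtain c where c: "c \<in> {1..n-2}" "p = thpart n c" by (auto simp: P_def)
      have "sdist B B' \<le> 6"
        by (rule sdist_small) (use h c part_sub part_close[OF n5 c(1)] in auto)
      then show "sdist B B' < diam ?b" using d8 by linarith
    qed
  qed
  have "(LEAST k. \<exists>P. small_partition ?b (diam ?b) P k) \<le> n - 2"
    by (rule Least_le) (use sp in blast)
  then show ?thesis using cb by (simp add: borsuk_def)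
qed

theorem proposition6p1:
  fixes n :: nat
  assumes "n \<ge> 5"
  shows "(\<forall>B\<in>theta_bases n. \<forall>B'\<in>theta_bases n. B \<inter> B' \<noteq> {})
    \<and> (\<forall>B\<in>dual_bases (theta_ground n) (theta_bases n).
         \<forall>B'\<in>dual_bases (theta_ground n) (theta_bases n). B \<inter> B' \<noteq> {})
    \<and> borsuk (theta_bases n) \<le> enat (n - 2)"
  using part1[OF assms] part2[OF assms] part3[OF assms]
  by (auto simp: dual_bases_def)

end
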